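(* For every integer $n\ge 3$ and every graph $G$, \[ \kappa'(G\times K_n)=\min\{\,n(n-1)\kappa'(G),\ (n-1)\delta(G)\,\}. \]
   Context: All graphs are finite, simple and undirected. $\kappa'(G)$ denotes the edge connectivity of $G$, the minimum number of edges whose removal disconnects $G$; it is $0$ if $G$ is disconnected or has only one vertex. $\delta(G)$ is the minimum degree of $G$ and $K_n$ is the complete graph on $n$ vertices. The direct product $G\times H$ has vertex set $V(G)\times V(H)$. Two vertices $(x,u),(y,v)$ are adjacent if and only if $xy\in E(G)$ and $uv\in E(H)$. *)

theory Defs
  imports Main
begin

definition simple_graph :: "'a set \<Rightarrow> 'a set set \<Rightarrow> bool" where
  "simple_graph V E \<longleftrightarrow> finite V \<and> V \<noteq> {} \<and>
     (\<forall>e\<in>E. \<exists>u v. e = {u, v} \<and> u \<noteq> v \<and> u \<in> V \<and> v \<in> V)"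

definition adj :: "'a set set \<Rightarrow> 'a \<Rightarrow> 'a \<Rightarrow> bool" where
  "adj E u v \<longleftrightarrow> {u, v} \<in> E"

definition connected_graph :: "'a set \<Rightarrow> 'a set set \<Rightarrow> bool" where
  "connected_graph V E \<longleftrightarrow> (\<forall>u\<in>V. \<forall>v\<in>V. (adj E)\<^sup>*\<^sup>* u v)"

definition edge_connectivity :: "'a set \<Rightarrow> 'a set set \<Rightarrow> nat" where
  "edge_connectivity V E =
     (if \<not> connected_graph V E \<or> card V \<le> 1 then 0
      else Min {card F | F. F \<subseteq> E \<and> \<not> connected_graph V (E - F)})"

definition degree :: "'a set \<Rightarrow> 'a set set \<Rightarrow> 'a \<Rightarrow> nat" where
  "degree V E u = card {v \<in> V. {u, v} \<in> E}"

definition min_degree :: "'a set \<Rightarrow> 'a set set \<Rightarrow> nat" where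
  "min_degree V E = Min (degree V E ` V)"

definition dprod_verts :: "'a set \<Rightarrow> 'b set \<Rightarrow> ('a \<times> 'b) set" where
  "dprod_verts V1 V2 = V1 \<times> V2"

definition dprod_edges :: "'a set set \<Rightarrow> 'b set set \<Rightarrow> ('a \<times> 'b) set set" where
  "dprod_edges E1 E2 = {{(x, u), (y, v)} | x y u v. {x, y} \<in> E1 \<and> {u, v} \<in> E2}"

definition K_verts :: "nat \<Rightarrow> nat set" where
  "K_verts n = {0..<n}"

definition K_edges :: "nat \<Rightarrow> nat set set" where
  "K_edges n = {{i, j} | i j. i < n \<and> j < n \<and> i \<noteq> j}"

end

theory Submission
  imports Defs
begin

lemma K_mem: "{i,j} \<in> K_edges n \<longleftrightarrow> i<n \<and> j<n \<and> i\<noteq>j"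
  unfolding K_edges_def by (auto simp: doubleton_eq_iff)

lemma P_mem: "{(x,i),(y,j)} \<in> dprod_edges E (K_edges n) \<longleftrightarrow> {x,y} \<in> E \<and> i<n \<and> j<n \<and> i\<noteq>j"
proof
  assume "{(x,i),(y,j)} \<in> dprod_edges E (K_edges n)"
  then obtain x' y' u v where eq: "{(x,i),(y,j)} = {(x',u),(y',v)}" and m: "{x',y'} \<in> E" "{u,v} \<in> K_edges n"
    unfolding dprod_edges_def by blast
  from m(2) have "u<n" "v<n" "u\<noteq>v" by (auto simp: K_mem)
  with eq m(1) show "{x,y} \<in> E \<and> i<n \<and> j<n \<and> i\<noteq>j"
    by (auto simp: doubleton_eq_iff insert_commute)
next
  assume "{x,y} \<in> E \<and> i<n \<and> j<n \<and> i\<noteq>j"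
  then show "{(x,i),(y,j)} \<in> dprod_edges E (K_edges n)"
    unfolding dprod_edges_def by (auto simp: K_mem)
qed

lemma P_form: "e \<in> dprod_edges E (K_edges n) \<Longrightarrow> \<exists>x y i j. e = {(x,i),(y,j)} \<and> {x,y}\<in>E \<and> i<n \<and> j<n \<and> i\<noteq>j"
  unfolding dprod_edges_def by (auto simp: K_mem)

lemma sg_edge: "simple_graph V E \<Longrightarrow> {x,y} \<in> E \<Longrightarrow> x \<in> V \<and> y \<in> V \<and> x \<noteq> y"
proof -
  assume sg: "simple_graph V E" and e: "{x,y} \<in> E"
  then obtain u v where "{x,y} = {u,v}" "u \<noteq> v" "u \<in> V" "v \<in> V"
    unfolding simple_graph_def by blast
  then show ?thesis by (auto simp: doubleton_eq_iff)
qed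

lemma sg_finE: "simple_graph V E \<Longrightarrow> finite E"
proof -
  assume sg: "simple_graph V E"
  have "E \<subseteq> Pow V" using sg_edge[OF sg] sg unfolding simple_graph_def by fastforce
  moreover have "finite V" using sg unfolding simple_graph_def by blast
  ultimately show ?thesis by (meson finite_Pow_iff finite_subset)
qed

lemma P_fin: "simple_graph V E \<Longrightarrow> finite (dprod_edges E (K_edges n))"
proof -
  assume sg: "simple_graph V E"
  have "dprod_edges E (K_edges n) \<subseteq> Pow (V \<times> {0..<n})"
    using sg_edge[OF sg] by (auto dest!: P_form)
  moreover have "finite V" using sg unfolding simple_graph_def by blast
  ultimately show ?thesis by (meson finite_Pow_iff finite_subset finite_SigmaI finite_atLeastLessThan)
qed

lemma reach_stays:
  assumes "(adj F)\<^sup>*\<^sup>* a b" "a \<in> X" "\<And>x y. {x,y} \<in> F \<Longrightarrow> x \<in> X \<Longrightarrow> y \<in> X"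
  shows "b \<in> X"
  using assms(1,2) by (induction rule: rtranclp_induct) (auto simp: adj_def intro: assms(3))

lemma ex3: "(n::nat) \<ge> 3 \<Longrightarrow> \<exists>k. k<n \<and> k\<noteq>i \<and> k\<noteq>j" by presburger


definition crossG :: "'a set \<Rightarrow> 'a set set \<Rightarrow> 'a set \<Rightarrow> 'a set set" where
  "crossG V E A = {e\<in>E. \<exists>a\<in>A. \<exists>b\<in>V-A. e={a,b}}"
definition Rset :: "'a set \<Rightarrow> 'a set set \<Rightarrow> 'a set \<Rightarrow> ('a\<times>'a) set" where
  "Rset V E A = {(a,b). a\<in>A \<and> b\<in>V-A \<and> {a,b}\<in>E}"
definition Qn :: "nat \<Rightarrow> (nat\<times>nat) set" where
  "Qn n = {(i,j). i<n \<and> j<n \<and> i\<noteq>j}"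
definition liftP :: "'a set \<Rightarrow> 'a set set \<Rightarrow> 'a set \<Rightarrow> nat \<Rightarrow> ('a\<times>nat) set set" where
  "liftP V E A n = (\<lambda>((a,b),(i,j)). {(a,i),(b,j)}) ` (Rset V E A \<times> Qn n)"

lemma card_Qn: "card (Qn n) = n*(n-1)"
proof -
  have e: "Qn n = {0..<n}\<times>{0..<n} - (\<lambda>i. (i,i)) ` {0..<n}"
    unfolding Qn_def by auto
  have c1: "card ((\<lambda>i. (i,i)) ` {0..<n}) = n"
    by (subst card_image) (auto simp: inj_on_def)
  have "card (Qn n) = n*n - n"
    unfolding e by (subst card_Diff_subset) (auto simp: c1)
  also have "\<dots> = n*(n-1)" by (simp add: diff_mult_distrib2)
  finally show ?thesis .
qed

lemma fin_Qn: "finite (Qn n)"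
  unfolding Qn_def by (rule finite_subset[of _ "{0..<n}\<times>{0..<n}"]) auto

lemma card_Rset:
  assumes "finite V" "A \<subseteq> V"
  shows "card (Rset V E A) = card (crossG V E A)" "finite (Rset V E A)"
proof -
  have "bij_betw (\<lambda>(a,b). {a,b}) (Rset V E A) (crossG V E A)"
    unfolding bij_betw_def inj_on_def Rset_def crossG_def
    by (auto simp: doubleton_eq_iff)
  then show "card (Rset V E A) = card (crossG V E A)" by (rule bij_betw_same_card)
  show "finite (Rset V E A)" using assms
    unfolding Rset_def by (auto intro: finite_subset[of _ "V\<times>V"])
qed

lemma card_liftP:
  assumes "finite V" "A \<subseteq> V"
  shows "card (liftP V E A n) = card (crossG V E A) * (n*(n-1))"
proof -
  have "inj_on (\<lambda>((a,b),(i,j)). {(a,i),(b,j)}) (Rset V E A \<times> Qn n)"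
    unfolding inj_on_def Rset_def by (auto simp: doubleton_eq_iff)
  then have "card (liftP V E A n) = card (Rset V E A \<times> Qn n)"
    unfolding liftP_def by (rule card_image)
  also have "\<dots> = card (crossG V E A) * (n*(n-1))"
    using card_Rset[OF assms, of E] fin_Qn by (simp add: card_Qn card_cartesian_product)
  finally show ?thesis .
qed

lemma liftP_sub: "liftP V E A n \<subseteq> dprod_edges E (K_edges n)"
  unfolding liftP_def Rset_def Qn_def by (auto simp: P_mem)

lemma prod_conn:
  assumes sg: "simple_graph V E" and c: "connected_graph V E" and cV: "card V \<ge> 2" and n: "n\<ge>3"
  shows "connected_graph (V \<times> {0..<n}) (dprod_edges E (K_edges n))"
proof -
  let ?R = "adj (dprod_edges E (K_edges n))"
  have fV: "finite V" using sg unfolding simple_graph_def by blast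
  have nb: "\<exists>y. {x,y} \<in> E" if "x \<in> V" for x
  proof -
    have "V - {x} \<noteq> {}"
    proof
      assume "V - {x} = {}"
      then have "V \<subseteq> {x}" by blast
      then have "card V \<le> 1" using card_mono[of "{x}" V] by (simp add: card_mono subset_singletonD)
      with cV show False by simp
    qed
    then obtain z where z: "z \<in> V" "z \<noteq> x" by blast
    then have "(adj E)\<^sup>*\<^sup>* x z" using c that unfolding connected_graph_def by blast
    then show ?thesis using z(2) by (cases rule: converse_rtranclpE) (auto simp: adj_def)
  qed
  have s2: "?R\<^sup>*\<^sup>* (x,i) (x,j)" if "x \<in> V" "i<n" "j<n" for x i j
  proof (cases "i = j")
    case True then show ?thesis by simp
  next
    case False
    obtain y where y: "{x,y} \<in> E" using nb[OF \<open>x\<in>V\<close>] by blast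
    obtain k where k: "k<n" "k\<noteq>i" "k\<noteq>j" using ex3[OF n] by blast
    have "?R (x,i) (y,k)" using y k that by (simp add: adj_def P_mem)
    moreover have "?R (y,k) (x,j)" using y k that by (simp add: adj_def P_mem insert_commute)
    ultimately show ?thesis by (meson rtranclp.rtrancl_into_rtrancl rtranclp.rtrancl_refl)
  qed
  have s3: "?R\<^sup>*\<^sup>* (x,i) (y,j)" if "{x,y} \<in> E" "i<n" "j<n" for x y i j
  proof -
    obtain k where k: "k<n" "k\<noteq>j" using ex3[OF n] by blast
    have "x \<in> V" using sg_edge[OF sg that(1)] by blast
    then have "?R\<^sup>*\<^sup>* (x,i) (x,k)" using s2 k that by blast
    moreover have "?R (x,k) (y,j)" using that k by (simp add: adj_def P_mem)
    ultimately show ?thesis by (meson rtranclp.rtrancl_into_rtrancl)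
  qed
  have s4: "\<forall>i j. i<n \<longrightarrow> j<n \<longrightarrow> ?R\<^sup>*\<^sup>* (x,i) (y,j)" if "(adj E)\<^sup>*\<^sup>* x y" "x \<in> V" for x y
    using that(1)
  proof (induction rule: rtranclp_induct)
    case base then show ?case using s2 that(2) by blast
  next
    case (step y z)
    show ?case
    proof (intro allI impI)
      fix i j assume ij: "i<n" "j<n"
      have "0 < n" using n by simp
      then have "?R\<^sup>*\<^sup>* (x,i) (y,0)" using step.IH ij by blast
      moreover have "?R\<^sup>*\<^sup>* (y,0) (z,j)" using s3 step.hyps(2) ij \<open>0<n\<close> by (simp add: adj_def)
      ultimately show "?R\<^sup>*\<^sup>* (x,i) (z,j)" by (rule rtranclp_trans)
    qed
  qed
  show ?thesis unfolding connected_graph_def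
    using s4 c unfolding connected_graph_def by auto
qed

lemma proj_reach:
  assumes "(adj (dprod_edges E (K_edges n)))\<^sup>*\<^sup>* a b"
  shows "(adj E)\<^sup>*\<^sup>* (fst a) (fst b)"
  using assms
proof (induction rule: rtranclp_induct)
  case base then show ?case by simp
next
  case (step b c)
  from step.hyps(2) obtain x y i j where e: "{b,c} = {(x,i),(y,j)}" "{x,y}\<in>E"
    unfolding adj_def by (blast dest: P_form)
  then have "adj E (fst b) (fst c)" unfolding adj_def by (auto simp: doubleton_eq_iff insert_commute)
  with step.IH show ?case by (rule rtranclp.rtrancl_into_rtrancl)
qed

lemma prod_disc:
  assumes sg: "simple_graph V E" and n: "n\<ge>3" and h: "\<not> connected_graph V E \<or> card V \<le> 1"
  shows "\<not> connected_graph (V \<times> {0..<n}) (dprod_edges E (K_edges n))"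
proof
  assume pc: "connected_graph (V \<times> {0..<n}) (dprod_edges E (K_edges n))"
  show False
  proof (cases "connected_graph V E")
    case False
    then obtain u v where uv: "u\<in>V" "v\<in>V" "\<not> (adj E)\<^sup>*\<^sup>* u v" unfolding connected_graph_def by blast
    then have "(adj (dprod_edges E (K_edges n)))\<^sup>*\<^sup>* (u,0) (v,0)" using pc n unfolding connected_graph_def by auto
    from proj_reach[OF this] uv show False by simp
  next
    case True
    with h have c1: "card V \<le> 1" by simp
    obtain x where x: "x \<in> V" using sg unfolding simple_graph_def by blast
    have fV: "finite V" using sg unfolding simple_graph_def by blast
    have V1: "V = {x}" using c1 x fV by (metis card_le_Suc0_iff_eq One_nat_def singleton_iff subsetI subset_antisym) 
    have noE: "\<not> adj (dprod_edges E (K_edges n)) a b" for a b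
    proof
      assume "adj (dprod_edges E (K_edges n)) a b"
      then obtain y z i j where "{y,z} \<in> E" unfolding adj_def by (blast dest: P_form)
      from sg_edge[OF sg this] V1 show False by auto
    qed
    have "(adj (dprod_edges E (K_edges n)))\<^sup>*\<^sup>* (x,0) (x,1)" using pc n x unfolding connected_graph_def by auto
    then show False using noE by (cases rule: converse_rtranclpE) auto
  qed
qed

lemma ub1:
  assumes sg: "simple_graph V E" and n: "n\<ge>1" and F0: "F0 \<subseteq> E" "\<not> connected_graph V (E - F0)"
  shows "\<exists>F. F \<subseteq> dprod_edges E (K_edges n) \<and>
      \<not> connected_graph (V \<times> {0..<n}) (dprod_edges E (K_edges n) - F) \<and> card F \<le> n*(n-1)*card F0"
proof -
  have fV: "finite V" using sg unfolding simple_graph_def by blast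
  obtain u v where uv: "u\<in>V" "v\<in>V" "\<not> (adj (E-F0))\<^sup>*\<^sup>* u v" using F0(2) unfolding connected_graph_def by blast
  define A where "A = {w\<in>V. (adj (E-F0))\<^sup>*\<^sup>* u w}"
  have AV: "A \<subseteq> V" unfolding A_def by blast
  have cF: "crossG V E A \<subseteq> F0"
  proof
    fix e assume "e \<in> crossG V E A"
    then obtain a b where ab: "e \<in> E" "a\<in>A" "b\<in>V-A" "e={a,b}" unfolding crossG_def by blast
    show "e \<in> F0"
    proof (rule ccontr)
      assume "e \<notin> F0"
      then have "adj (E-F0) a b" using ab by (simp add: adj_def)
      then have "b \<in> A" using ab unfolding A_def by (auto intro: rtranclp.rtrancl_into_rtrancl)
      then show False using ab by blast
    qed
  qed
  have fF0: "finite F0" using sg_finE[OF sg] F0(1) finite_subset by blast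
  have "card (liftP V E A n) = card (crossG V E A) * (n*(n-1))" by (rule card_liftP[OF fV AV])
  also have "\<dots> \<le> card F0 * (n*(n-1))" using card_mono[OF fF0 cF] by simp
  finally have c: "card (liftP V E A n) \<le> n*(n-1)*card F0" by (simp add: mult.commute)
  have nc: "\<not> connected_graph (V \<times> {0..<n}) (dprod_edges E (K_edges n) - liftP V E A n)"
  proof
    assume "connected_graph (V \<times> {0..<n}) (dprod_edges E (K_edges n) - liftP V E A n)"
    then have r: "(adj (dprod_edges E (K_edges n) - liftP V E A n))\<^sup>*\<^sup>* (u,0) (v,0)"
      using uv n unfolding connected_graph_def by auto
    have "(v,0::nat) \<in> {p. fst p \<in> A}"
    proof (rule reach_stays[OF r])
      show "(u,0::nat) \<in> {p. fst p \<in> A}" using uv unfolding A_def by simp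
    next
      fix p q assume pq: "{p,q} \<in> dprod_edges E (K_edges n) - liftP V E A n" "p \<in> {p. fst p \<in> A}"
      obtain x i where p: "p = (x,i)" by (cases p)
      obtain y j where q: "q = (y,j)" by (cases q)
      have e: "{x,y} \<in> E" "i<n" "j<n" "i\<noteq>j" using pq(1) p q by (auto simp: P_mem)
      have "x \<in> A" using pq(2) p by simp
      show "q \<in> {p. fst p \<in> A}"
      proof (rule ccontr)
        assume "q \<notin> {p. fst p \<in> A}"
        then have "y \<notin> A" using q by simp
        moreover have "y \<in> V" using sg_edge[OF sg e(1)] by blast
        ultimately have "{(x,i),(y,j)} \<in> liftP V E A n" unfolding liftP_def Rset_def Qn_def
          using e \<open>x\<in>A\<close> by (auto intro!: image_eqI[where x="((x,y),(i,j))"])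
        then show False using pq(1) p q by simp
      qed
    qed
    then have "v \<in> A" by simp
    then show False using uv unfolding A_def by simp
  qed
  show ?thesis using liftP_sub[of V E A n] nc c by (intro exI[of _ "liftP V E A n"]) simp
qed

lemma ub2:
  assumes sg: "simple_graph V E" and n: "n\<ge>2" and x0: "x0 \<in> V"
  shows "\<exists>F. F \<subseteq> dprod_edges E (K_edges n) \<and>
      \<not> connected_graph (V \<times> {0..<n}) (dprod_edges E (K_edges n) - F) \<and> card F \<le> (n-1)*degree V E x0"
proof -
  have fV: "finite V" using sg unfolding simple_graph_def by blast
  define N where "N = {y\<in>V. {x0,y}\<in>E}"
  define F where "F = (\<lambda>(y,j). {(x0,0::nat),(y,j)}) ` (N \<times> {1..<n})"
  have FE: "F \<subseteq> dprod_edges E (K_edges n)" unfolding F_def N_def using n by (auto simp: P_mem)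
  have fN: "finite N" using fV unfolding N_def by simp
  have "card F \<le> card (N \<times> {1..<n})" unfolding F_def by (rule card_image_le) (simp add: fN)
  also have "\<dots> = card N * (n-1)" by (simp add: card_cartesian_product)
  finally have c: "card F \<le> (n-1)*degree V E x0" unfolding degree_def N_def by (simp add: mult.commute)
  have nc: "\<not> connected_graph (V \<times> {0..<n}) (dprod_edges E (K_edges n) - F)"
  proof
    assume "connected_graph (V \<times> {0..<n}) (dprod_edges E (K_edges n) - F)"
    then have r: "(adj (dprod_edges E (K_edges n) - F))\<^sup>*\<^sup>* (x0,0) (x0,1)"
      using x0 n unfolding connected_graph_def by auto
    have "(x0,1) \<in> {(x0,0::nat)}"
    proof (rule reach_stays[OF r])
      fix p q assume pq: "{p,q} \<in> dprod_edges E (K_edges n) - F" "p \<in> {(x0,0::nat)}"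
      obtain y j where q: "q = (y,j)" by (cases q)
      have e: "{x0,y} \<in> E" "0<n" "j<n" "0\<noteq>j" using pq q by (auto simp: P_mem)
      then have "y \<in> N" using sg_edge[OF sg e(1)] unfolding N_def by blast
      then have "{p,q} \<in> F" using e pq(2) q unfolding F_def by auto
      then show "q \<in> {(x0,0::nat)}" using pq by blast
    qed simp
    then show False by simp
  qed
  show ?thesis using FE nc c by (intro exI[of _ F]) simp
qed

lemma comb:
  assumes n: "n\<ge>3" and i: "i0<n" "i1<n" "i0\<in>A" "i1\<notin>A"
  shows "n-1 \<le> card {(i,j). i<n \<and> j<n \<and> i\<noteq>j \<and> (i\<in>A \<longleftrightarrow> j\<notin>B)}"
proof -
  let ?T = "{(i,j). i<n \<and> j<n \<and> i\<noteq>j \<and> (i\<in>A \<longleftrightarrow> j\<notin>B)}"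
  have fT: "finite ?T" by (rule finite_subset[of _ "{0..<n}\<times>{0..<n}"]) auto
  define S where "S = {0..<n} - {i0,i1}"
  define g where "g = (\<lambda>j. if j\<in>B then (i1,j) else (i0,j))"
  have ne: "i0 \<noteq> i1" using i by blast
  have cS: "card S = n-2" unfolding S_def using i ne by (subst card_Diff_subset) auto
  have ig: "inj_on g S" unfolding inj_on_def g_def by (auto split: if_splits)
  have gT: "g ` S \<subseteq> ?T" unfolding g_def S_def using i by auto
  obtain e where e: "e \<in> ?T" "snd e \<in> {i0,i1}"
  proof (cases "i0 \<in> B")
    case True then show ?thesis using that[of "(i1,i0)"] i ne by auto
  next
    case F1: False
    show ?thesis
    proof (cases "i1 \<notin> B")
      case True then show ?thesis using that[of "(i0,i1)"] i ne by auto
    next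
      case False
      obtain k where k: "k<n" "k\<noteq>i0" "k\<noteq>i1" using ex3[OF n] by blast
      show ?thesis
      proof (cases "k \<in> A")
        case True then show ?thesis using that[of "(k,i0)"] i k F1 by auto
      next
        case False then show ?thesis using that[of "(k,i1)"] i k \<open>\<not> i1 \<notin> B\<close> by auto
      qed
    qed
  qed
  have "snd e \<notin> S" using e(2) unfolding S_def by auto
  moreover have "\<forall>p\<in>g`S. snd p \<in> S" by (auto simp: g_def)
  ultimately have enot: "e \<notin> g ` S" by blast
  have "card (insert e (g ` S)) = n-2+1" using enot ig cS
    by (simp add: card_image S_def)
  also have "\<dots> = n-1" using n by simp
  finally have "card (insert e (g ` S)) = n-1" .
  moreover have "card (insert e (g ` S)) \<le> card ?T" using e(1) gT fT by (intro card_mono) auto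
  ultimately show ?thesis by simp
qed

lemma lb:
  assumes sg: "simple_graph V E" and n: "n\<ge>3"
    and cmin: "\<And>F. F\<subseteq>E \<Longrightarrow> \<not> connected_graph V (E-F) \<Longrightarrow> c \<le> card F"
    and dmin: "\<And>x. x\<in>V \<Longrightarrow> d \<le> degree V E x"
    and F: "F \<subseteq> dprod_edges E (K_edges n)" "\<not> connected_graph (V \<times> {0..<n}) (dprod_edges E (K_edges n) - F)"
  shows "min (n*(n-1)*c) ((n-1)*d) \<le> card F"
proof -
  let ?E' = "dprod_edges E (K_edges n)"
  let ?V' = "V \<times> {0..<n}"
  let ?R = "adj (?E' - F)"
  have fV: "finite V" using sg unfolding simple_graph_def by blast
  have fF: "finite F" using F(1) P_fin[OF sg] finite_subset by blast
  obtain p q where pq: "p \<in> ?V'" "q \<in> ?V'" "\<not> ?R\<^sup>*\<^sup>* p q" using F(2) unfolding connected_graph_def by blast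
  define X where "X = {w\<in>?V'. ?R\<^sup>*\<^sup>* p w}"
  have pX: "p \<in> X" using pq unfolding X_def by simp
  have qX: "q \<notin> X" using pq unfolding X_def by simp
  have cross: "{a,b} \<in> F" if "a \<in> X" "b \<in> ?V'" "b \<notin> X" "{a,b} \<in> ?E'" for a b
  proof (rule ccontr)
    assume "{a,b} \<notin> F"
    then have "?R a b" using that by (simp add: adj_def)
    then have "b \<in> X" using that unfolding X_def by (auto intro: rtranclp.rtrancl_into_rtrancl)
    then show False using that by blast
  qed
  show ?thesis
  proof (cases "\<forall>x\<in>V. (\<forall>i<n. (x,i)\<in>X) \<or> (\<forall>i<n. (x,i)\<notin>X)")
    case True
    define A where "A = {x\<in>V. (x,0)\<in>X}"
    have AV: "A \<subseteq> V" unfolding A_def by blast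
    have full: "(x,i) \<in> X" if "x \<in> A" "i<n" for x i
      using True that unfolding A_def by (metis (mono_tags, lifting) mem_Collect_eq n not_less_eq_eq numeral_3_eq_3 zero_less_Suc le_less_trans less_Suc_eq_le)
    have empty: "(x,i) \<notin> X" if "x \<in> V" "x \<notin> A" "i<n" for x i
      using True that n unfolding A_def by fastforce
    have LF: "liftP V E A n \<subseteq> F"
    proof
      fix e assume "e \<in> liftP V E A n"
      then obtain a b i j where e: "e = {(a,i),(b,j)}" "a\<in>A" "b\<in>V" "b\<notin>A" "{a,b}\<in>E" "i<n" "j<n" "i\<noteq>j"
        unfolding liftP_def Rset_def Qn_def by auto
      show "e \<in> F" unfolding e(1)
        by (rule cross) (use e full empty in \<open>auto simp: P_mem\<close>)
    qed
    obtain px pi where p: "p = (px,pi)" by (cases p)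
    obtain qx qi where q: "q = (qx,qi)" by (cases q)
    have pA: "px \<in> A"
    proof -
      have "px \<in> V" "pi < n" using pq p by auto
      then show ?thesis using True pX p unfolding A_def using n by auto
    qed
    have qA: "qx \<in> V" "qx \<notin> A"
    proof -
      show "qx \<in> V" using pq q by auto
      have "qi < n" using pq q by auto
      then show "qx \<notin> A" using full qX q by blast
    qed
    have nc: "\<not> connected_graph V (E - crossG V E A)"
    proof
      assume "connected_graph V (E - crossG V E A)"
      then have r: "(adj (E - crossG V E A))\<^sup>*\<^sup>* px qx" using pA AV qA unfolding connected_graph_def by blast
      have "qx \<in> A"
      proof (rule reach_stays[OF r pA])
        fix x y assume xy: "{x,y} \<in> E - crossG V E A" "x \<in> A"
        have "y \<in> V" using sg_edge[OF sg] xy by blast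
        then show "y \<in> A" using xy unfolding crossG_def by blast
      qed
      then show False using qA by blast
    qed
    have "c \<le> card (crossG V E A)" by (rule cmin) (use nc in \<open>auto simp: crossG_def\<close>)
    then have "n*(n-1)*c \<le> card (crossG V E A) * (n*(n-1))" by (simp add: mult.commute)
    also have "\<dots> = card (liftP V E A n)" by (rule card_liftP[OF fV AV, symmetric])
    also have "\<dots> \<le> card F" by (rule card_mono[OF fF LF])
    finally show ?thesis by simp
  next
    case False
    then obtain x0 i0 i1 where x0: "x0 \<in> V" "i0<n" "(x0,i0)\<in>X" "i1<n" "(x0,i1)\<notin>X" by blast
    define N where "N = {y\<in>V. {x0,y}\<in>E}"
    define T where "T = (\<lambda>y. {(i,j). i<n \<and> j<n \<and> i\<noteq>j \<and> (i\<in>{i. (x0,i)\<in>X} \<longleftrightarrow> j\<notin>{j. (y,j)\<in>X})})"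
    define h where "h = (\<lambda>(y,(i::nat,j::nat)). {(x0,i),(y,j)})"
    have fN: "finite N" using fV unfolding N_def by simp
    have fT: "finite (T y)" for y unfolding T_def by (rule finite_subset[of _ "{0..<n}\<times>{0..<n}"]) auto
    have Nne: "y \<noteq> x0" "y \<in> V" if "y \<in> N" for y using that sg_edge[OF sg] unfolding N_def by auto
    have inj: "inj_on h (Sigma N T)"
      unfolding inj_on_def h_def using Nne by (auto simp: doubleton_eq_iff)
    have sub: "h ` Sigma N T \<subseteq> F"
    proof
      fix e assume "e \<in> h ` Sigma N T"
      then obtain y i j where e: "e = {(x0,i),(y,j)}" "y \<in> N" "(i,j) \<in> T y" unfolding h_def by auto
      have ed: "{(x0,i),(y,j)} \<in> ?E'" "i<n" "j<n" using e(2,3) unfolding N_def T_def by (auto simp: P_mem)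
      have vv: "(x0,i) \<in> ?V'" "(y,j) \<in> ?V'" using x0 Nne[OF e(2)] ed by auto
      show "e \<in> F"
      proof (cases "(x0,i) \<in> X")
        case True
        then have "(y,j) \<notin> X" using e(3) unfolding T_def by auto
        then show ?thesis unfolding e(1) using cross True vv ed by blast
      next
        case False
        then have "(y,j) \<in> X" using e(3) unfolding T_def by auto
        then show ?thesis unfolding e(1) using cross[of "(y,j)" "(x0,i)"] False vv ed by (simp add: insert_commute)
      qed
    qed
    have cT: "n-1 \<le> card (T y)" for y
      unfolding T_def by (rule comb[OF n x0(2,4)]) (use x0 in auto)
    have "(n-1)*d \<le> (n-1) * degree V E x0" using dmin[OF x0(1)] by simp
    also have "\<dots> = card N * (n-1)" unfolding degree_def N_def by simp
    also have "\<dots> = (\<Sum>y\<in>N. n-1)" by simp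
    also have "\<dots> \<le> (\<Sum>y\<in>N. card (T y))" by (rule sum_mono, rule cT)
    also have "\<dots> = card (Sigma N T)" using fN fT by (simp add: card_SigmaI)
    also have "\<dots> = card (h ` Sigma N T)" using inj by (simp add: card_image)
    also have "\<dots> \<le> card F" by (rule card_mono[OF fF sub])
    finally show ?thesis by simp
  qed
qed

theorem corollary1:
  fixes V :: "'a set" and E :: "'a set set" and n :: nat
  assumes "n \<ge> 3" and "simple_graph V E"
  shows "edge_connectivity (dprod_verts V (K_verts n)) (dprod_edges E (K_edges n)) =
         min (n * (n - 1) * edge_connectivity V E) ((n - 1) * min_degree V E)"
proof -
  note n = assms(1) and sg = assms(2)
  let ?E' = "dprod_edges E (K_edges n)"
  let ?V' = "V \<times> {0..<n}"
  have V'eq: "dprod_verts V (K_verts n) = ?V'" by (simp add: dprod_verts_def K_verts_def)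
  have fV: "finite V" and Vne: "V \<noteq> {}" using sg unfolding simple_graph_def by auto
  show ?thesis
  proof (cases "\<not> connected_graph V E \<or> card V \<le> 1")
    case True
    then have "edge_connectivity V E = 0" by (auto simp: edge_connectivity_def)
    moreover have "\<not> connected_graph ?V' ?E'" by (rule prod_disc[OF sg n True])
    ultimately show ?thesis by (simp add: edge_connectivity_def V'eq)
  next
    case False
    then have cG: "connected_graph V E" and cV: "card V \<ge> 2" by auto
    define SG where "SG = {card F |F. F \<subseteq> E \<and> \<not> connected_graph V (E - F)}"
    define SP where "SP = {card F |F. F \<subseteq> ?E' \<and> \<not> connected_graph ?V' (?E' - F)}"
    have ecG: "edge_connectivity V E = Min SG" using False unfolding SG_def edge_connectivity_def by auto
    have "card ?V' = card V * n" by (simp add: card_cartesian_product)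
    moreover have "2*3 \<le> card V * n" using cV n by (rule mult_le_mono)
    ultimately have cV': "\<not> card ?V' \<le> 1" by linarith
    have ecP: "edge_connectivity (dprod_verts V (K_verts n)) ?E' = Min SP"
      using prod_conn[OF sg cG cV n] cV' unfolding SP_def edge_connectivity_def V'eq by auto
    have fSG: "finite SG"
    proof -
      have "SG \<subseteq> card ` Pow E" unfolding SG_def by auto
      then show ?thesis using sg_finE[OF sg] finite_subset by blast
    qed
    have fSP: "finite SP"
    proof -
      have "SP \<subseteq> card ` Pow ?E'" unfolding SP_def by auto
      then show ?thesis using P_fin[OF sg] finite_subset by blast
    qed
    have "\<not> connected_graph V (E - E)"
    proof
      assume a: "connected_graph V (E - E)"
      obtain u v where uv: "u \<in> V" "v \<in> V" "u \<noteq> v"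
      proof -
        obtain u where u: "u \<in> V" using Vne by blast
        have "V \<noteq> {u}" using cV by auto
        then obtain v where "v \<in> V" "v \<noteq> u" using u by blast
        then show ?thesis using that u by blast
      qed
      then have "(adj (E - E))\<^sup>*\<^sup>* u v" using a unfolding connected_graph_def by blast
      then show False using uv(3) by (cases rule: converse_rtranclpE) (auto simp: adj_def)
    qed
    then have "card E \<in> SG" unfolding SG_def by blast
    then have "Min SG \<in> SG" using fSG Min_in by blast
    then obtain F0 where F0: "F0 \<subseteq> E" "\<not> connected_graph V (E - F0)" "card F0 = Min SG"
      unfolding SG_def by auto
    have cmin: "Min SG \<le> card F" if "F \<subseteq> E" "\<not> connected_graph V (E - F)" for F
      using that fSG unfolding SG_def by (auto intro: Min_le)
    define d where "d = min_degree V E"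
    have "d \<in> degree V E ` V" unfolding d_def min_degree_def using fV Vne by (intro Min_in) auto
    then obtain x0 where x0: "x0 \<in> V" "degree V E x0 = d" by auto
    have dmin: "d \<le> degree V E x" if "x \<in> V" for x
      unfolding d_def min_degree_def using fV that by (intro Min_le) auto
    obtain F1 where F1: "F1 \<subseteq> ?E'" "\<not> connected_graph ?V' (?E' - F1)" "card F1 \<le> n*(n-1)*card F0"
      using ub1[OF sg _ F0(1,2), of n] n by auto
    obtain F2 where F2: "F2 \<subseteq> ?E'" "\<not> connected_graph ?V' (?E' - F2)" "card F2 \<le> (n-1)*degree V E x0"
      using ub2[OF sg _ x0(1), of n] n by auto
    have "card F1 \<in> SP" "card F2 \<in> SP" unfolding SP_def using F1 F2 by auto
    then have u1: "Min SP \<le> card F1" "Min SP \<le> card F2" using fSP by auto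
    have "Min SP \<in> SP" using fSP \<open>card F1 \<in> SP\<close> Min_in by blast
    then obtain F where F: "F \<subseteq> ?E'" "\<not> connected_graph ?V' (?E' - F)" "card F = Min SP"
      unfolding SP_def by auto
    have l: "min (n*(n-1)*Min SG) ((n-1)*d) \<le> card F"
      by (rule lb[OF sg n cmin dmin F(1,2)])
    show ?thesis unfolding ecP ecG d_def[symmetric]
      using l F(3) u1 F1(3) F2(3) F0(3) x0(2) by simp
  qed
qed

end
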